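(* Let $s\in\mathbb{C}$ with $\mathrm{Re}(s)>0$ and set $J^\infty(s):=\int_n^\infty z^{3-2s}\,\mathrm{Tr}(\Delta_n+z^2)^{-2}\,dz$. Then, as $n\to\infty$, for every $N\in\mathbb{N}$ $$J^\infty(s)=a_\infty(s)\,n^{2-2s}+O(n^{-N}),\qquad a_\infty(s)=\int_1^\infty z^{3-2s}\int_0^1\!\!\int_0^1\Big(\frac{\sin^2(\pi x)}{\pi^2}+\frac{\sin^2(\pi y)}{\pi^2}+z^2\Big)^{-2}dx\,dy\,dz.$$
   Context: $\Delta_n$ is the $5$-point star Laplacian on $(\mathbb{Z}/n\mathbb{Z})^2$, $\Delta_n u(k)=\frac{n^2}{4\pi^2}(4u(k_1,k_2)-u(k_1\pm1,k_2)-u(k_1,k_2\pm1))$, with eigenvalues $\frac{n^2}{\pi^2}(\sin^2(\frac{\pi k_1}{n})+\sin^2(\frac{\pi k_2}{n}))$, $k_1,k_2\in\{0,\dots,n-1\}$; so $\mathrm{Tr}(\Delta_n+z^2)^{-2}=\sum_{k_1,k_2=0}^{n-1}\big(\frac{n^2}{\pi^2}\sin^2(\frac{\pi k_1}{n})+\frac{n^2}{\pi^2}\sin^2(\frac{\pi k_2}{n})+z^2\big)^{-2}$. *)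

theory Defs
  imports "HOL-Analysis.Analysis" "HOL-Library.Landau_Symbols"
begin

text \<open>Eigenvalue of the 5-point star Laplacian on the discrete torus (Z/nZ)^2
  indexed by (k1,k2), k1,k2 in {0..n-1}.\<close>
definition lap_eigenvalue :: "nat \<Rightarrow> nat \<Rightarrow> nat \<Rightarrow> real" where
  "lap_eigenvalue n k1 k2 =
     (real n)\<^sup>2 / pi\<^sup>2 * (sin (pi * real k1 / real n))\<^sup>2
   + (real n)\<^sup>2 / pi\<^sup>2 * (sin (pi * real k2 / real n))\<^sup>2"

text \<open>Tr (Delta_n + z^2)^(-2), as the sum over the spectrum.\<close>
definition tr_res_sq :: "nat \<Rightarrow> real \<Rightarrow> real" where
  "tr_res_sq n z = (\<Sum>k1<n. \<Sum>k2<n. 1 / (lap_eigenvalue n k1 k2 + z\<^sup>2)\<^sup>2)"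

definition J_inf :: "nat \<Rightarrow> complex \<Rightarrow> complex" where
  "J_inf n s = integral {real n..}
     (\<lambda>z. complex_of_real z powr (3 - 2 * s) * complex_of_real (tr_res_sq n z))"

definition a_inf :: "complex \<Rightarrow> complex" where
  "a_inf s = integral {1..}
     (\<lambda>z. complex_of_real z powr (3 - 2 * s) * complex_of_real
        (integral {0..1} (\<lambda>x. integral {0..1} (\<lambda>y.
           1 / ((sin (pi * x))\<^sup>2 / pi\<^sup>2 + (sin (pi * y))\<^sup>2 / pi\<^sup>2 + z\<^sup>2)\<^sup>2))))"

end

theory Submission
  imports Defs "HOL-Real_Asymp.Real_Asymp"
begin



lemma sin_pow_cis_sum:
  fixes th :: real
  shows "complex_of_real (sin th ^ (2*j)) =
    (\<Sum>m\<le>2*j. complex_of_real (real (2*j choose m) * (-1)^(2*j-m) / (-4)^j) * cis ((2*real m - 2*real j) * th))"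
proof -
  have e: "complex_of_real (sin th) = (cis th + (- cis (-th))) / (2*\<i>)"
    by (simp add: complex_eq_iff)
  have p: "(2*\<i>) ^ (2*j) = (-4::complex)^j"
    by (simp add: power_mult)
  have "complex_of_real (sin th ^ (2*j)) = (cis th + (- cis (-th)))^(2*j) / (-4)^j"
    by (simp only: of_real_power e power_divide p)
  also have "(cis th + (- cis (-th)))^(2*j) = (\<Sum>m\<le>2*j. of_nat (2*j choose m) * cis th ^ m * (- cis (-th))^(2*j-m))"
    by (rule binomial_ring)
  also have "\<dots> = (\<Sum>m\<le>2*j. of_nat (2*j choose m) * (-1)^(2*j-m) * cis ((2*real m - 2*real j) * th))"
  proof (rule sum.cong[OF refl])
    fix m assume "m \<in> {..2*j}"
    then have mj: "m \<le> 2*j" by simp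
    have "cis th ^ m * (- cis (-th))^(2*j-m) = (-1)^(2*j-m) * (cis (real m * th) * cis (real (2*j-m) * (-th)))"
      by (subst power_minus, simp only: Complex.DeMoivre mult_minus_right, simp add: ac_simps)
    also have "cis (real m * th) * cis (real (2*j-m) * (-th)) = cis ((2*real m - 2*real j) * th)"
      using mj by (simp only: cis_mult, simp add: of_nat_diff algebra_simps)
    finally show "of_nat (2*j choose m) * cis th ^ m * (- cis (-th))^(2*j-m) = of_nat (2*j choose m) * (-1)^(2*j-m) * cis ((2*real m - 2*real j) * th)"
      by (simp add: mult.assoc)
  qed
  finally show ?thesis
    by (simp add: sum_divide_distrib)
qed

lemma sin_pow_cos_sum:
  fixes th :: real
  shows "sin th ^ (2*j) =
    (\<Sum>m\<le>2*j. (real (2*j choose m) * (-1)^(2*j-m) / (-4)^j) * cos ((2*real m - 2*real j) * th))"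
proof -
  have "sin th ^ (2*j) = Re (complex_of_real (sin th ^ (2*j)))" by simp
  also have "\<dots> = (\<Sum>m\<le>2*j. (real (2*j choose m) * (-1)^(2*j-m) / (-4)^j) * cos ((2*real m - 2*real j) * th))"
    unfolding sin_pow_cis_sum by (simp add: Re_sum)
  finally show ?thesis .
qed



lemma cos_sum_roots:
  fixes p :: int
  assumes p0: "p \<noteq> 0" and pn: "\<bar>p\<bar> < int n"
  shows "(\<Sum>k<n. cos (2*pi* of_int p * (real k / real n))) = 0"
proof -
  have n0: "n > 0" using pn p0 by linarith
  define w where "w = cis (2*pi* of_int p / real n)"
  have wk: "cis (2*pi* of_int p * (real k / real n)) = w ^ k" for k
    unfolding w_def Complex.DeMoivre by (simp add: field_simps)
  have w1: "w \<noteq> 1"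
  proof
    assume "w = 1"
    then have "cos (2*pi* of_int p / real n) = 1"
      unfolding w_def by (metis cis.sel(1) one_complex.sel(1))
    then obtain q :: int where q: "2*pi* of_int p / real n = of_int q * 2 * pi"
      by (auto simp: cos_one_2pi_int)
    then have "real_of_int p = of_int q * real n" using n0 by (simp add: field_simps)
    then have pq: "p = q * int n" by (metis of_int_eq_iff of_int_mult of_int_of_nat_eq)
    show False
    proof (cases "q = 0")
      case True then show ?thesis using pq p0 by simp
    next
      case False
      then have "\<bar>q * int n\<bar> \<ge> int n" by (simp add: abs_mult mult_le_cancel_right1) linarith
      then show ?thesis using pq pn by simp
    qed
  qed
  have wn: "w ^ n = 1"
    unfolding w_def Complex.DeMoivre using n0
    by (simp add: field_simps) (metis cis_multiple_2pi Ints_of_int mult.commute mult.left_commute)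
  have "(\<Sum>k<n. w ^ k) = 0"
    using geometric_sum[OF w1, of n] wn by simp
  moreover have "(\<Sum>k<n. cis (2*pi * of_int p * (real k / real n))) = (\<Sum>k<n. w ^ k)"
    by (simp only: wk)
  moreover have "(\<Sum>k<n. cos (2*pi * of_int p * (real k / real n))) = Re (\<Sum>k<n. cis (2*pi * of_int p * (real k / real n)))"
    by (simp only: Re_sum cis.sel)
  ultimately show ?thesis by simp
qed

lemma cos_integral01:
  fixes p :: int
  assumes p0: "p \<noteq> 0"
  shows "integral {0..1} (\<lambda>x. cos (2*pi* of_int p * x)) = 0"
proof -
  have c: "2*pi* of_int p \<noteq> 0" using p0 by simp
  have "((\<lambda>x. cos (2*pi* of_int p * x)) has_integral
          (sin (2*pi* of_int p * 1) / (2*pi* of_int p) - sin (2*pi* of_int p * 0) / (2*pi* of_int p))) {0..1}"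
    apply (rule fundamental_theorem_of_calculus)
     apply simp
    using c
    by (auto intro!: derivative_eq_intros simp flip: has_real_derivative_iff_has_vector_derivative)
  then show ?thesis
    by (simp add: integral_unique)
qed



lemma cos_sum_mj:
  assumes "m \<le> 2*j" "j < n"
  shows "(\<Sum>k<n. cos ((2*real m - 2*real j) * (pi * (real k / real n)))) = (if m = j then real n else 0)"
proof (cases "m = j")
  case True then show ?thesis by simp
next
  case False
  define p where "p = int m - int j"
  have "p \<noteq> 0" "\<bar>p\<bar> < int n" using False assms unfolding p_def by auto
  from cos_sum_roots[OF this] show ?thesis using False
    by (simp add: p_def algebra_simps)
qed

lemma cos_int_mj:
  shows "integral {0..1} (\<lambda>x. cos ((2*real m - 2*real j) * (pi * x))) = (if m = j then 1 else 0)"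
proof (cases "m = j")
  case True then show ?thesis by simp
next
  case False
  define p where "p = int m - int j"
  have "p \<noteq> 0" using False unfolding p_def by auto
  from cos_integral01[OF this] show ?thesis using False
    by (simp add: p_def algebra_simps)
qed

lemma moment1:
  assumes "j < n"
  shows "(\<Sum>k<n. sin (pi * (real k / real n)) ^ (2*j)) = real n * integral {0..1} (\<lambda>x. sin (pi * x) ^ (2*j))"
proof -
  define c where "c m = real (2*j choose m) * (-1)^(2*j-m) / (-4)^j" for m
  have "(\<Sum>k<n. sin (pi * (real k / real n)) ^ (2*j))
      = (\<Sum>k<n. \<Sum>m\<le>2*j. c m * cos ((2*real m - 2*real j) * (pi * (real k / real n))))"
    unfolding c_def by (subst sin_pow_cos_sum) (rule refl)
  also have "\<dots> = (\<Sum>m\<le>2*j. c m * (\<Sum>k<n. cos ((2*real m - 2*real j) * (pi * (real k / real n)))))"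
    by (subst sum.swap) (simp add: sum_distrib_left)
  also have "\<dots> = (\<Sum>m\<le>2*j. c m * (if m = j then real n else 0))"
    using assms by (intro sum.cong refl) (simp only: cos_sum_mj atMost_iff)
  also have "\<dots> = (\<Sum>m\<le>2*j. if m = j then c j * real n else 0)" by (rule sum.cong) auto
  also have "\<dots> = c j * real n" by simp
  finally have L: "(\<Sum>k<n. sin (pi * (real k / real n)) ^ (2*j)) = c j * real n" .
  have "integral {0..1} (\<lambda>x. sin (pi * x) ^ (2*j))
      = integral {0..1} (\<lambda>x. \<Sum>m\<le>2*j. c m * cos ((2*real m - 2*real j) * (pi * x)))"
    unfolding c_def by (subst sin_pow_cos_sum) (rule refl)
  also have "\<dots> = (\<Sum>m\<le>2*j. integral {0..1} (\<lambda>x. c m * cos ((2*real m - 2*real j) * (pi * x))))"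
    by (rule integral_sum) (auto intro!: integrable_continuous_interval continuous_intros)
  also have "\<dots> = (\<Sum>m\<le>2*j. c m * (if m = j then 1 else 0))"
    by (intro sum.cong refl) (simp add: cos_int_mj)
  also have "\<dots> = (\<Sum>m\<le>2*j. if m = j then c j else 0)" by (rule sum.cong) auto
  also have "\<dots> = c j" by simp
  finally show ?thesis using L by simp
qed


definition uu :: "real \<Rightarrow> real" where "uu x = (sin (pi * x))\<^sup>2 / pi\<^sup>2"
definition ww :: "real \<Rightarrow> real \<Rightarrow> real" where "ww x y = uu x + uu y"
definition mu :: "nat \<Rightarrow> real" where "mu a = integral {0..1} (\<lambda>x. uu x ^ a)"
definition MM :: "nat \<Rightarrow> real" where "MM j = (\<Sum>a\<le>j. real (j choose a) * mu a * mu (j - a))"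

lemma cont_uu [continuous_intros]: "continuous_on S (\<lambda>x. uu x)"
  unfolding uu_def by (intro continuous_intros) simp

lemma uu_bounds: "0 \<le> uu x" "uu x \<le> 1/8"
proof -
  show "0 \<le> uu x" unfolding uu_def by simp
  have "3*3 < pi*pi" using pi_gt3 by (intro mult_strict_mono) auto
  then have "pi\<^sup>2 \<ge> 8" by (simp add: power2_eq_square)
  moreover have "(sin (pi * x))\<^sup>2 \<le> 1" by (simp add: abs_square_le_1)
  ultimately show "uu x \<le> 1/8" unfolding uu_def by (simp add: divide_le_eq)
qed

lemma moment_uu:
  assumes "a < n"
  shows "(\<Sum>k<n. uu (real k / real n) ^ a) = real n * mu a"
proof -
  have e: "uu x ^ a = sin (pi * x) ^ (2*a) / pi ^ (2*a)" for x
    unfolding uu_def by (simp add: power_divide power_mult)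
  show ?thesis
    unfolding mu_def e using moment1[OF assms]
    by (simp add: sum_divide_distrib[symmetric])
qed

lemma inner_pow:
  "integral {0..1} (\<lambda>y. ww x y ^ j) = (\<Sum>a\<le>j. real (j choose a) * uu x ^ a * mu (j - a))"
proof -
  have "integral {0..1} (\<lambda>y. ww x y ^ j) = integral {0..1} (\<lambda>y. \<Sum>a\<le>j. real (j choose a) * uu x ^ a * uu y ^ (j - a))"
    unfolding ww_def by (subst binomial_ring) (rule refl)
  also have "\<dots> = (\<Sum>a\<le>j. integral {0..1} (\<lambda>y. real (j choose a) * uu x ^ a * uu y ^ (j - a)))"
    by (rule integral_sum) (auto intro!: integrable_continuous_interval continuous_intros)
  also have "\<dots> = (\<Sum>a\<le>j. real (j choose a) * uu x ^ a * mu (j - a))"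
    unfolding mu_def by simp
  finally show ?thesis .
qed

lemma outer_pow:
  "integral {0..1} (\<lambda>x. \<Sum>a\<le>j. real (j choose a) * uu x ^ a * mu (j - a)) = MM j"
proof -
  have "integral {0..1} (\<lambda>x. \<Sum>a\<le>j. real (j choose a) * uu x ^ a * mu (j - a))
     = (\<Sum>a\<le>j. integral {0..1} (\<lambda>x. real (j choose a) * uu x ^ a * mu (j - a)))"
    by (rule integral_sum) (auto intro!: integrable_continuous_interval continuous_intros)
  also have "\<dots> = MM j"
    unfolding MM_def mu_def by (intro sum.cong refl) (simp add: mult_ac)
  finally show ?thesis .
qed

lemma disc_pow:
  assumes "j < n"
  shows "(\<Sum>k1<n. \<Sum>k2<n. ww (real k1 / real n) (real k2 / real n) ^ j) = (real n)\<^sup>2 * MM j"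
proof -
  have "(\<Sum>k1<n. \<Sum>k2<n. ww (real k1 / real n) (real k2 / real n) ^ j)
     = (\<Sum>k1<n. \<Sum>k2<n. \<Sum>a\<le>j. real (j choose a) * uu (real k1 / real n) ^ a * uu (real k2 / real n) ^ (j - a))"
    unfolding ww_def by (subst binomial_ring) (rule refl)
  also have "\<dots> = (\<Sum>a\<le>j. real (j choose a) * ((\<Sum>k1<n. uu (real k1 / real n) ^ a) * (\<Sum>k2<n. uu (real k2 / real n) ^ (j - a))))"
  proof -
    have "(\<Sum>k1<n. \<Sum>k2<n. \<Sum>a\<le>j. real (j choose a) * uu (real k1 / real n) ^ a * uu (real k2 / real n) ^ (j - a))
       = (\<Sum>k1<n. \<Sum>a\<le>j. \<Sum>k2<n. real (j choose a) * uu (real k1 / real n) ^ a * uu (real k2 / real n) ^ (j - a))"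
      by (rule sum.cong[OF refl], rule sum.swap)
    also have "\<dots> = (\<Sum>a\<le>j. \<Sum>k1<n. \<Sum>k2<n. real (j choose a) * uu (real k1 / real n) ^ a * uu (real k2 / real n) ^ (j - a))"
      by (rule sum.swap)
    also have "\<dots> = (\<Sum>a\<le>j. real (j choose a) * ((\<Sum>k1<n. uu (real k1 / real n) ^ a) * (\<Sum>k2<n. uu (real k2 / real n) ^ (j - a))))"
      by (rule sum.cong[OF refl], subst sum_product) (simp only: sum_distrib_left mult.assoc)
    finally show ?thesis .
  qed
  also have "\<dots> = (\<Sum>a\<le>j. real (j choose a) * (real n * mu a) * (real n * mu (j - a)))"
    using assms by (intro sum.cong refl) (simp add: moment_uu mult.assoc)
  also have "\<dots> = (real n)\<^sup>2 * MM j"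
    unfolding MM_def by (simp add: sum_distrib_left power2_eq_square mult_ac)
  finally show ?thesis .
qed

lemma geom_deriv_identity:
  fixes x :: real
  shows "(1 - x)^2 * (\<Sum>j<M. real (j+1) * x^j) = 1 - real (M+1) * x^M + real M * x^(M+1)"
  by (induction M) (simp_all add: algebra_simps power2_eq_square)

lemma key_remainder:
  fixes r :: real
  assumes "0 \<le> r" "r \<le> 1"
  shows "\<bar>1 / (1+r)^2 - (\<Sum>j<M. real (j+1) * (-r)^j)\<bar> \<le> real (2*M+1) * r^M"
proof -
  have pos: "(1+r)^2 \<ge> 1" by (rule one_le_power) (use assms in simp)
  have nz: "(1+r)^2 \<noteq> 0" using pos by auto
  have G: "(1+r)^2 * (\<Sum>j<M. real (j+1) * (-r)^j) = 1 - real (M+1) * (-r)^M + real M * (-r)^(M+1)"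
    using geom_deriv_identity[of "-r" M] by simp
  have "(\<Sum>j<M. real (j+1) * (-r)^j) = ((1+r)^2 * (\<Sum>j<M. real (j+1) * (-r)^j)) / (1+r)^2"
    using nz by simp
  also have "\<dots> = (1 - real (M+1) * (-r)^M + real M * (-r)^(M+1)) / (1+r)^2"
    by (simp only: G)
  finally have s: "(\<Sum>j<M. real (j+1) * (-r)^j) = (1 - real (M+1) * (-r)^M + real M * (-r)^(M+1)) / (1+r)^2" .
  have "1 / (1+r)^2 - (\<Sum>j<M. real (j+1) * (-r)^j) = (real (M+1) * (-r)^M - real M * (-r)^(M+1)) / (1+r)^2"
    unfolding s by (simp only: diff_divide_distrib[symmetric]) (simp add: algebra_simps)
  also have "\<bar>\<dots>\<bar> \<le> \<bar>real (M+1) * (-r)^M - real M * (-r)^(M+1)\<bar>"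
    using pos by (simp add: abs_divide divide_le_eq mult_le_cancel_left1 mult_le_cancel_right1)
  also have "\<dots> \<le> real (M+1) * r^M + real M * r^(M+1)"
  proof -
    have "\<bar>real (M+1) * (-r)^M - real M * (-r)^(M+1)\<bar> \<le> \<bar>real (M+1) * (-r)^M\<bar> + \<bar>real M * (-r)^(M+1)\<bar>"
      by (rule abs_triangle_ineq4)
    also have "\<dots> = real (M+1) * r^M + real M * r^(M+1)"
      using assms by (simp only: abs_mult power_abs abs_minus_cancel abs_of_nonneg of_nat_0_le_iff)
    finally show ?thesis .
  qed
  also have "\<dots> \<le> real (2*M+1) * r^M"
  proof -
    have "r^(M+1) \<le> r^M" using assms by (simp add: power_le_one mult_left_le_one_le)
    then have "real M * r^(M+1) \<le> real M * r^M" by (simp add: mult_left_mono)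
    then show ?thesis by (simp add: algebra_simps)
  qed
  finally show ?thesis .
qed

definition ff :: "real \<Rightarrow> real \<Rightarrow> real \<Rightarrow> real" where
  "ff t x y = 1 / ((sin (pi * x))\<^sup>2 / pi\<^sup>2 + (sin (pi * y))\<^sup>2 / pi\<^sup>2 + t\<^sup>2)\<^sup>2"
definition bb :: "real \<Rightarrow> nat \<Rightarrow> real" where "bb t j = real (j+1) * (-1)^j / t^(2*j+4)"
definition PP :: "nat \<Rightarrow> real \<Rightarrow> real \<Rightarrow> real \<Rightarrow> real" where
  "PP n t x y = (\<Sum>j<n. bb t j * ww x y ^ j)"
definition hP :: "nat \<Rightarrow> real \<Rightarrow> real \<Rightarrow> real" where
  "hP n t x = (\<Sum>j<n. bb t j * (\<Sum>a\<le>j. real (j choose a) * uu x ^ a * mu (j - a)))"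
definition SS :: "nat \<Rightarrow> real \<Rightarrow> real" where
  "SS n t = (\<Sum>k1<n. \<Sum>k2<n. ff t (real k1 / real n) (real k2 / real n))"
definition GG :: "real \<Rightarrow> real \<Rightarrow> real" where
  "GG t x = integral {0..1} (\<lambda>y. ff t x y)"
definition AA :: "real \<Rightarrow> real" where
  "AA t = integral {0..1} (\<lambda>x. integral {0..1} (\<lambda>y. ff t x y))"

lemma cont_uu2 [continuous_intros]:
  fixes g :: "'a::metric_space \<Rightarrow> real"
  shows "continuous_on S g \<Longrightarrow> continuous_on S (\<lambda>x. uu (g x))"
  unfolding uu_def by (auto intro!: continuous_intros)

lemma ff_eq: "ff t x y = 1 / (ww x y + t\<^sup>2)\<^sup>2"
  unfolding ff_def ww_def uu_def by simp

lemma ww_bounds: "0 \<le> ww x y" "ww x y \<le> 1/4"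
  unfolding ww_def using uu_bounds[of x] uu_bounds[of y] by auto

lemma ff_cont [continuous_intros]:
  fixes f g h :: "'a::metric_space \<Rightarrow> real"
  assumes "continuous_on S f" "continuous_on S g" "continuous_on S h" "\<And>p. p \<in> S \<Longrightarrow> 1 \<le> f p"
  shows "continuous_on S (\<lambda>p. ff (f p) (g p) (h p))"
proof -
  have "uu (g p) + uu (h p) + (f p)\<^sup>2 \<noteq> 0" if "p \<in> S" for p
    using ww_bounds[of "g p" "h p"] assms(4)[OF that] unfolding ww_def by (smt (verit) one_le_power)
  then show ?thesis
    unfolding ff_eq ww_def using assms by (intro continuous_intros) auto
qed

lemma ff_nonneg: "0 \<le> ff t x y"
  unfolding ff_eq by simp

lemma ff_le: assumes "1 \<le> t" shows "ff t x y \<le> 1 / t^4"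
proof -
  have "t\<^sup>2 \<le> ww x y + t\<^sup>2" using ww_bounds by simp
  then have "(t\<^sup>2)\<^sup>2 \<le> (ww x y + t\<^sup>2)\<^sup>2" by (rule power_mono) simp
  moreover have "(t\<^sup>2)\<^sup>2 > 0" using assms by simp
  ultimately show ?thesis unfolding ff_eq
    by (simp add: power_mult[symmetric] frac_le)
qed

lemma rem_bound:
  assumes t: "1 \<le> t"
  shows "\<bar>ff t x y - PP n t x y\<bar> \<le> real (2*n+1) * (1/4)^n / t^4"
proof -
  define w where "w = ww x y"
  define r where "r = w / t\<^sup>2"
  have w0: "0 \<le> w" "w \<le> 1/4" unfolding w_def using ww_bounds by auto
  have t2: "1 \<le> t\<^sup>2" using t by (simp add: one_le_power)
  have r0: "0 \<le> r" "r \<le> 1/4"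
    unfolding r_def using w0 t2 by (auto simp: divide_le_eq) 
  have tpos: "t > 0" using t by simp
  have e1: "ff t x y = (1 / t^4) * (1 / (1 + r)^2)"
  proof -
    have "w + t\<^sup>2 = t\<^sup>2 * (1 + r)" unfolding r_def using tpos by (simp add: field_simps)
    then have "(w + t\<^sup>2)\<^sup>2 = t^4 * (1 + r)^2"
      by (simp add: power_mult_distrib power_mult[symmetric])
    then show ?thesis unfolding ff_eq w_def[symmetric] by simp
  qed
  have e2: "PP n t x y = (1 / t^4) * (\<Sum>j<n. real (j+1) * (-r)^j)"
    unfolding PP_def w_def[symmetric] r_def bb_def sum_distrib_left
  proof (rule sum.cong[OF refl])
    fix j
    have "(- (w / t\<^sup>2)) ^ j = (-1)^j * w^j / t^(2*j)"
      by (subst power_minus) (simp add: power_divide power_mult)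
    then show "real (j + 1) * (- 1) ^ j / t ^ (2 * j + 4) * w ^ j = 1 / t ^ 4 * (real (j + 1) * (- (w / t\<^sup>2)) ^ j)"
      using tpos by (simp add: power_add field_simps)
  qed
  have "\<bar>ff t x y - PP n t x y\<bar> = (1 / t^4) * \<bar>1 / (1 + r)^2 - (\<Sum>j<n. real (j+1) * (-r)^j)\<bar>"
    unfolding e1 e2 right_diff_distrib[symmetric] abs_mult using tpos by simp
  also have "\<dots> \<le> (1 / t^4) * (real (2*n+1) * r^n)"
    using key_remainder[of r n] r0 tpos by (intro mult_left_mono) auto
  also have "\<dots> \<le> (1 / t^4) * (real (2*n+1) * (1/4)^n)"
    using r0 tpos by (intro mult_left_mono power_mono) auto
  finally show ?thesis by simp
qed

lemma inner_P: "integral {0..1} (\<lambda>y. PP n t x y) = hP n t x"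
proof -
  have "integral {0..1} (\<lambda>y. PP n t x y) = (\<Sum>j<n. integral {0..1} (\<lambda>y. bb t j * ww x y ^ j))"
    unfolding PP_def ww_def
    by (rule integral_sum) (auto intro!: integrable_continuous_interval continuous_intros)
  also have "\<dots> = hP n t x"
    unfolding hP_def by (simp add: inner_pow)
  finally show ?thesis .
qed

lemma cont_hP [continuous_intros]: "continuous_on S (\<lambda>x. hP n t x)"
  unfolding hP_def by (intro continuous_intros)

lemma outer_P: "integral {0..1} (\<lambda>x. hP n t x) = (\<Sum>j<n. bb t j * MM j)"
proof -
  have "integral {0..1} (\<lambda>x. hP n t x) = (\<Sum>j<n. integral {0..1} (\<lambda>x. bb t j * (\<Sum>a\<le>j. real (j choose a) * uu x ^ a * mu (j - a))))"
    unfolding hP_def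
    by (rule integral_sum) (auto intro!: integrable_continuous_interval continuous_intros)
  also have "\<dots> = (\<Sum>j<n. bb t j * MM j)"
    by (simp add: outer_pow)
  finally show ?thesis .
qed

lemma disc_P: "(\<Sum>k1<n. \<Sum>k2<n. PP n t (real k1 / real n) (real k2 / real n)) = (real n)\<^sup>2 * (\<Sum>j<n. bb t j * MM j)"
proof -
  have "(\<Sum>k1<n. \<Sum>k2<n. PP n t (real k1 / real n) (real k2 / real n))
      = (\<Sum>k1<n. \<Sum>j<n. \<Sum>k2<n. bb t j * ww (real k1 / real n) (real k2 / real n) ^ j)"
    unfolding PP_def by (rule sum.cong[OF refl], rule sum.swap)
  also have "\<dots> = (\<Sum>j<n. \<Sum>k1<n. \<Sum>k2<n. bb t j * ww (real k1 / real n) (real k2 / real n) ^ j)"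
    by (rule sum.swap)
  also have "\<dots> = (\<Sum>j<n. bb t j * ((real n)\<^sup>2 * MM j))"
    by (rule sum.cong[OF refl]) (simp add: sum_distrib_left[symmetric] disc_pow)
  also have "\<dots> = (real n)\<^sup>2 * (\<Sum>j<n. bb t j * MM j)"
    by (simp add: sum_distrib_left mult_ac)
  finally show ?thesis .
qed

lemma cont_GG_x:
  assumes "1 \<le> t"
  shows "continuous_on {0..1} (\<lambda>x. GG t x)"
  unfolding GG_def cbox_interval[symmetric]
  by (rule integral_continuous_on_param) (use assms in \<open>auto simp: case_prod_beta intro!: continuous_intros\<close>)

lemma cont_GG:
  shows "continuous_on ({1..} \<times> {0..1}) (\<lambda>(t, x). GG t x)"
proof -
  have "continuous_on ({1..} \<times> {0..1}) (\<lambda>p. integral (cbox 0 1) (\<lambda>y. ff (fst p) (snd p) y))"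
    by (rule integral_continuous_on_param) (auto simp: case_prod_beta intro!: continuous_intros)
  then show ?thesis unfolding GG_def by (simp add: case_prod_beta cbox_interval)
qed

lemma cont_AA: "continuous_on {1..} AA"
proof -
  have "continuous_on {1..} (\<lambda>t. integral (cbox 0 1) (\<lambda>x. GG t x))"
    by (rule integral_continuous_on_param) (use cont_GG in \<open>simp add: cbox_interval\<close>)
  then show ?thesis unfolding AA_def GG_def[symmetric] by (simp add: cbox_interval)
qed

lemma main_bound:
  assumes t: "1 \<le> t"
  shows "\<bar>SS n t - (real n)\<^sup>2 * AA t\<bar> \<le> 2 * (real n)\<^sup>2 * (real (2*n+1) * (1/4)^n / t^4)"
proof -
  define e where "e = real (2*n+1) * (1/4)^n / t^4"
  define Q where "Q = (\<Sum>j<n. bb t j * MM j)"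
  have "\<bar>SS n t - (real n)\<^sup>2 * Q\<bar> = \<bar>\<Sum>k1<n. \<Sum>k2<n. ff t (real k1 / real n) (real k2 / real n) - PP n t (real k1 / real n) (real k2 / real n)\<bar>"
    unfolding SS_def Q_def disc_P[symmetric] by (simp add: sum_subtractf)
  also have "\<dots> \<le> (\<Sum>k1<n. \<bar>\<Sum>k2<n. ff t (real k1 / real n) (real k2 / real n) - PP n t (real k1 / real n) (real k2 / real n)\<bar>)"
    by (rule sum_abs)
  also have "\<dots> \<le> (\<Sum>k1<n. \<Sum>k2<n. e)"
  proof (rule sum_mono)
    fix k1
    have "\<bar>\<Sum>k2<n. ff t (real k1 / real n) (real k2 / real n) - PP n t (real k1 / real n) (real k2 / real n)\<bar>
        \<le> (\<Sum>k2<n. \<bar>ff t (real k1 / real n) (real k2 / real n) - PP n t (real k1 / real n) (real k2 / real n)\<bar>)"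
      by (rule sum_abs)
    also have "\<dots> \<le> (\<Sum>k2<n. e)"
      unfolding e_def by (rule sum_mono) (rule rem_bound[OF t])
    finally show "\<bar>\<Sum>k2<n. ff t (real k1 / real n) (real k2 / real n) - PP n t (real k1 / real n) (real k2 / real n)\<bar> \<le> (\<Sum>k2<n. e)" .
  qed
  also have "\<dots> = (real n)\<^sup>2 * e" by (simp add: power2_eq_square)
  finally have D: "\<bar>SS n t - (real n)\<^sup>2 * Q\<bar> \<le> (real n)\<^sup>2 * e" .
  have inner: "\<bar>GG t x - hP n t x\<bar> \<le> e" for x
  proof -
    have "GG t x - hP n t x = integral {0..1} (\<lambda>y. ff t x y - PP n t x y)"
      unfolding GG_def inner_P[symmetric]
      by (rule integral_diff[symmetric]) (auto simp: PP_def ww_def intro!: integrable_continuous_interval continuous_intros t)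
    also have "\<bar>\<dots>\<bar> \<le> e * (1 - 0)"
    proof -
      have cI: "continuous_on {0..1} (\<lambda>y. ff t x y - PP n t x y)"
        unfolding PP_def ww_def by (auto intro!: continuous_intros t)
      have "norm (integral {0..1} (\<lambda>y. ff t x y - PP n t x y)) \<le> e * (1 - 0)"
        by (rule integral_bound) (use cI rem_bound[OF t] in \<open>auto simp: e_def\<close>)
      then show ?thesis by simp
    qed
    finally show ?thesis by simp
  qed
  have C: "\<bar>AA t - Q\<bar> \<le> e"
  proof -
    have "AA t - Q = integral {0..1} (\<lambda>x. GG t x - hP n t x)"
      unfolding AA_def GG_def[symmetric] Q_def outer_P[symmetric]
      by (rule integral_diff[symmetric]) (auto intro!: integrable_continuous_interval continuous_intros cont_GG_x t)
    also have "\<bar>\<dots>\<bar> \<le> e * (1 - 0)"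
      using integral_bound[of 0 1 "\<lambda>x. GG t x - hP n t x" e] inner
      by (auto intro!: continuous_intros cont_GG_x t)
    finally show ?thesis by simp
  qed
  have "\<bar>SS n t - (real n)\<^sup>2 * AA t\<bar> \<le> \<bar>SS n t - (real n)\<^sup>2 * Q\<bar> + (real n)\<^sup>2 * \<bar>AA t - Q\<bar>"
  proof -
    have "SS n t - (real n)\<^sup>2 * AA t = (SS n t - (real n)\<^sup>2 * Q) - (real n)\<^sup>2 * (AA t - Q)"
      by (simp add: algebra_simps)
    then have "\<bar>SS n t - (real n)\<^sup>2 * AA t\<bar> \<le> \<bar>SS n t - (real n)\<^sup>2 * Q\<bar> + \<bar>(real n)\<^sup>2 * (AA t - Q)\<bar>"
      by (metis abs_triangle_ineq4)
    then show ?thesis by (simp add: abs_mult)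
  qed
  also have "\<dots> \<le> (real n)\<^sup>2 * e + (real n)\<^sup>2 * e"
    using D C by (intro add_mono mult_left_mono) auto
  finally show ?thesis unfolding e_def by simp
qed

lemma cpowr_exp: "0 < t \<Longrightarrow> complex_of_real t powr z = exp (z * complex_of_real (ln t))"
  by (simp add: powr_def Ln_of_real)

lemma cpowr_norm: "0 < t \<Longrightarrow> norm (complex_of_real t powr z) = t powr Re z"
  by (simp add: norm_powr_real_powr)

lemma cpowr_cont: "continuous_on {1..} (\<lambda>t. complex_of_real t powr z)"
proof -
  have "continuous_on {1..} (\<lambda>t::real. exp (z * complex_of_real (ln t)))"
    by (auto intro!: continuous_intros)
  then show ?thesis
    by (rule continuous_on_cong[THEN iffD1, rotated 2]) (auto simp: cpowr_exp)
qed

lemma tr_res_scaled: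
  assumes n: "n > 0" and t: "t > 0"
  shows "tr_res_sq n (real n * t) = SS n t / (real n)^4"
proof -
  have "1 / (lap_eigenvalue n k1 k2 + (real n * t)\<^sup>2)\<^sup>2 = ff t (real k1 / real n) (real k2 / real n) / (real n)^4" for k1 k2
  proof -
    have "lap_eigenvalue n k1 k2 + (real n * t)\<^sup>2 =
      (real n)\<^sup>2 * ((sin (pi * (real k1 / real n)))\<^sup>2 / pi\<^sup>2 + (sin (pi * (real k2 / real n)))\<^sup>2 / pi\<^sup>2 + t\<^sup>2)"
    proof -
      have a: "(real n)\<^sup>2 / pi\<^sup>2 * (sin (pi * real k / real n))\<^sup>2 = (real n)\<^sup>2 * ((sin (pi * (real k / real n)))\<^sup>2 / pi\<^sup>2)" for k
        by simp
      show ?thesis unfolding lap_eigenvalue_def a power_mult_distrib distrib_left ..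
    qed
    then have "(lap_eigenvalue n k1 k2 + (real n * t)\<^sup>2)\<^sup>2 = (real n)^4 * ((sin (pi * (real k1 / real n)))\<^sup>2 / pi\<^sup>2 + (sin (pi * (real k2 / real n)))\<^sup>2 / pi\<^sup>2 + t\<^sup>2)\<^sup>2"
      by (simp only: power_mult_distrib power_mult[symmetric]) simp
    then show ?thesis unfolding ff_def by simp
  qed
  then show ?thesis
    unfolding tr_res_sq_def SS_def by (simp add: sum_divide_distrib)
qed

lemma CV:
  fixes f :: "real \<Rightarrow> 'a::euclidean_space" and c :: real
  assumes c: "c > 0" and ai: "(\<lambda>t. f (c*t)) absolutely_integrable_on {1..}"
  shows "integral {c..} f = c *\<^sub>R integral {1..} (\<lambda>t. f (c*t))"
proof -
  define h where "h y = indicator {c..} y *\<^sub>R f y" for y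
  have hc: "h (0 + c*x) = indicator {1..} x *\<^sub>R f (c*x)" for x
    using c unfolding h_def indicator_def by auto
  have i1: "integrable lebesgue (\<lambda>x. h (0 + c*x))"
    using ai unfolding set_integrable_def hc .
  then have ih: "integrable lebesgue h"
    using lebesgue_integrable_real_affine_iff[of c h 0] c by simp
  then have si: "set_integrable lebesgue {c..} f"
    unfolding set_integrable_def h_def .
  have "integral {c..} f = (LINT x:{c..}|lebesgue. f x)"
    using set_lebesgue_integral_eq_integral(2)[OF si] by simp
  also have "\<dots> = (\<integral>x. h x \<partial>lebesgue)"
    unfolding set_lebesgue_integral_def h_def ..
  also have "\<dots> = \<bar>c\<bar> *\<^sub>R (\<integral>x. h (0 + c*x) \<partial>lebesgue)"
    by (rule lebesgue_integral_real_affine) (use c in simp)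
  also have "(\<integral>x. h (0 + c*x) \<partial>lebesgue) = (LINT x:{1..}|lebesgue. f (c*x))"
    unfolding set_lebesgue_integral_def hc ..
  also have "\<dots> = integral {1..} (\<lambda>t. f (c*t))"
    using set_lebesgue_integral_eq_integral(2)[OF ai] by simp
  finally show ?thesis using c by simp
qed

lemma int_from_bound:
  fixes g :: "real \<Rightarrow> complex"
  assumes cont: "continuous_on {1..} g" and sig: "sig > 0"
    and bd: "\<And>t. 1 \<le> t \<Longrightarrow> norm (g t) \<le> C * t powr (-1 - 2 * sig)"
  shows "g absolutely_integrable_on {1..}" "g integrable_on {1..}"
proof -
  have S: "{1::real..} \<in> sets lebesgue"
    using borel_closed[OF closed_atLeast, of "1::real"] by (metis sets_completionI_sets sets_lborel)
  have hi: "((\<lambda>t. t powr (-1 - 2 * sig)) has_integral (-(1 powr (-1 - 2 * sig + 1)) / (-1 - 2 * sig + 1))) {1..}"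
    by (rule has_integral_powr_to_inf) (use sig in auto)
  then have gi: "(\<lambda>t. C * t powr (-1 - 2 * sig)) integrable_on {1..}"
    using has_integral_mult_right[OF hi, of C] unfolding integrable_on_def by blast
  have gint: "g integrable_on {1..}"
    by (rule measurable_bounded_by_integrable_imp_integrable[OF continuous_imp_measurable_on_sets_lebesgue[OF cont S] gi _ S])
       (use bd in simp)
  then show "g integrable_on {1..}" .
  show "g absolutely_integrable_on {1..}"
    by (rule absolutely_integrable_integrable_bound[OF _ gint gi]) (use bd in simp)
qed

lemma powr_over4: fixes t a :: real shows "0 < t \<Longrightarrow> t powr a * (1 / t^4) = t powr (a - 4)"
proof -
  assume t: "0 < t"
  have "t powr 4 = t^4" using powr_realpow[OF t, of 4] by simp
  then show ?thesis using t by (simp add: powr_diff)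
qed

lemma AA_bound:
  assumes t: "1 \<le> t" shows "\<bar>AA t\<bar> \<le> 1 / t^4"
proof -
  have g: "\<bar>GG t x\<bar> \<le> 1 / t^4" for x
  proof -
    have "norm (integral {0..1} (\<lambda>y. ff t x y)) \<le> (1 / t^4) * (1 - 0)"
    proof (rule integral_bound)
      show "continuous_on {0..1} (\<lambda>y. ff t x y)"
        by (rule ff_cont[where f="\<lambda>y. t"]) (auto intro: continuous_on_id continuous_on_const t)
      show "norm (ff t x y) \<le> 1 / t^4" if "y \<in> {0..1}" for y
        using ff_le[OF t, of x y] ff_nonneg[of t x y] by simp
    qed simp
    then show ?thesis unfolding GG_def by simp
  qed
  have "norm (integral {0..1} (\<lambda>x. GG t x)) \<le> (1 / t^4) * (1 - 0)"
    by (rule integral_bound) (use t g cont_GG_x in simp_all)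
  then show ?thesis unfolding AA_def GG_def[symmetric] by simp
qed

lemma SS_bound:
  assumes t: "1 \<le> t" shows "\<bar>SS n t\<bar> \<le> (real n)\<^sup>2 / t^4"
proof -
  have "\<bar>SS n t\<bar> = SS n t" unfolding SS_def by (simp add: ff_nonneg sum_nonneg)
  also have "\<dots> \<le> (\<Sum>k1<n. \<Sum>k2<n. 1 / t^4)"
    unfolding SS_def by (intro sum_mono ff_le t)
  also have "\<dots> = (real n)\<^sup>2 / t^4" by (simp add: power2_eq_square)
  finally show ?thesis .
qed

lemma SS_cont: "continuous_on {1..} (SS n)"
proof -
  have "continuous_on {1..} (\<lambda>t. ff t (real k1 / real n) (real k2 / real n))" for k1 k2
    by (rule ff_cont[where f="\<lambda>t. t"]) (auto intro: continuous_on_id continuous_on_const)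
  then show ?thesis unfolding SS_def by (intro continuous_on_sum) auto
qed

lemma Cn_small:
  "eventually (\<lambda>n::nat. 2 * (real n)\<^sup>2 * (real (2*n+1) * (1/4)^n) \<le> real n powr (- real N)) sequentially"
  by real_asymp

lemma key_estimate:
  fixes s :: complex and n :: nat
  assumes sig: "Re s > 0" and n: "n \<ge> 1"
  shows "norm (J_inf n s - a_inf s * of_nat n powr (2 - 2 * s))
           \<le> 2 * (real n)\<^sup>2 * (real (2*n+1) * (1/4)^n) / (2 * Re s)"
proof -
  define sg where "sg = Re s"
  have sg0: "sg > 0" using sig sg_def by simp
  define e where "e = 3 - 2 * s"
  have Ree: "Re e = 3 - 2 * sg" unfolding e_def sg_def by simp
  define C where "C = 2 * (real n)\<^sup>2 * (real (2*n+1) * (1/4)^n)"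
  have C0: "C \<ge> 0" unfolding C_def by simp
  define fa where "fa t = complex_of_real t powr e * complex_of_real (AA t)" for t
  define fs where "fs t = complex_of_real t powr e * complex_of_real (SS n t)" for t
  define fj where "fj z = complex_of_real z powr e * complex_of_real (tr_res_sq n z)" for z
  have npos: "real n > 0" using n by simp
  have pw_over: "t powr (3 - 2 * sg) * (1 / t^4) = t powr (-1 - 2 * sg)" if "t \<ge> 1" for t :: real
    using powr_over4[of t "3 - 2 * sg"] that by simp
  have fa_bd: "norm (fa t) \<le> 1 * t powr (-1 - 2 * sg)" if t: "1 \<le> t" for t
  proof -
    have "norm (fa t) = t powr (3 - 2 * sg) * \<bar>AA t\<bar>"
      unfolding fa_def norm_mult using t by (simp add: cpowr_norm Ree)
    also have "\<dots> \<le> t powr (3 - 2 * sg) * (1 / t^4)"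
      by (rule mult_left_mono[OF AA_bound[OF t]]) simp
    finally show ?thesis using pw_over[OF t] by simp
  qed
  have fs_bd: "norm (fs t) \<le> (real n)\<^sup>2 * t powr (-1 - 2 * sg)" if t: "1 \<le> t" for t
  proof -
    have "norm (fs t) = t powr (3 - 2 * sg) * \<bar>SS n t\<bar>"
      unfolding fs_def norm_mult using t by (simp add: cpowr_norm Ree)
    also have "\<dots> \<le> t powr (3 - 2 * sg) * ((real n)\<^sup>2 / t^4)"
      by (rule mult_left_mono[OF SS_bound[OF t]]) simp
    also have "\<dots> = (real n)\<^sup>2 * (t powr (3 - 2 * sg) * (1 / t^4))" by simp
    finally have "norm (fs t) \<le> (real n)\<^sup>2 * (t powr (3 - 2 * sg) * (1 / t^4))" .
    then show ?thesis by (simp only: pw_over[OF t])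
  qed
  have fa_cont: "continuous_on {1..} fa"
    unfolding fa_def by (intro continuous_intros cpowr_cont continuous_on_of_real cont_AA)? 
  have fs_cont: "continuous_on {1..} fs"
    unfolding fs_def by (intro continuous_intros cpowr_cont SS_cont)
  have fa_int: "fa absolutely_integrable_on {1..}" "fa integrable_on {1..}"
    using int_from_bound[OF fa_cont sg0 fa_bd] by auto
  have fs_int: "fs absolutely_integrable_on {1..}" "fs integrable_on {1..}"
    using int_from_bound[OF fs_cont sg0 fs_bd] by auto
  define K where "K = complex_of_real (real n) powr e / complex_of_real ((real n)^4)"
  have eqj: "fj (real n * t) = K * fs t" if t: "t \<in> {1..}" for t
  proof -
    have tp: "t > 0" using t by simp
    have pe: "complex_of_real (real n * t) powr e = complex_of_real (real n) powr e * complex_of_real t powr e"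
      unfolding of_real_mult by (rule powr_times_real) (use tp in auto)
    have tr: "tr_res_sq n (real n * t) = SS n t / (real n)^4"
      by (rule tr_res_scaled) (use n tp in auto)
    show ?thesis
      unfolding fj_def fs_def K_def pe tr of_real_divide
      by (simp only: divide_inverse mult_ac)
  qed
  have fjc: "continuous_on {1..} (\<lambda>t. fj (real n * t))"
  proof -
    have "continuous_on {1..} (\<lambda>t. K * fs t)" by (intro continuous_on_mult continuous_on_const fs_cont)
    then show ?thesis by (rule continuous_on_eq) (rule eqj[symmetric])
  qed
  have fjb: "norm (fj (real n * t)) \<le> (norm K * (real n)\<^sup>2) * t powr (-1 - 2 * sg)" if "1 \<le> t" for t
    using eqj[of t] fs_bd[OF that] that
    by (simp add: norm_mult mult.assoc mult_left_mono)
  have fj_ai: "(\<lambda>t. fj (real n * t)) absolutely_integrable_on {1..}"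
    using int_from_bound[OF fjc sg0 fjb] by auto
  have J_eq: "J_inf n s = complex_of_real (real n) * (K * integral {1..} fs)"
  proof -
    have "J_inf n s = integral {real n..} fj" unfolding J_inf_def fj_def e_def ..
    also have "\<dots> = real n *\<^sub>R integral {1..} (\<lambda>t. fj (real n * t))"
      by (rule CV[OF npos fj_ai])
    also have "integral {1..} (\<lambda>t. fj (real n * t)) = integral {1..} (\<lambda>t. K * fs t)"
      by (rule integral_cong) (rule eqj)
    also have "\<dots> = K * integral {1..} fs" by simp
    finally show ?thesis by (simp add: scaleR_conv_of_real)
  qed
  have A_eq: "a_inf s = integral {1..} fa"
    unfolding a_inf_def fa_def AA_def ff_def e_def ..
  define L where "L = ln (real n)"
  define P where "P = exp (- (2 * s) * complex_of_real L)"
  have nexp: "complex_of_real (real n) = exp (complex_of_real L)"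
    unfolding L_def using npos by (simp add: exp_of_real)
  have P1: "complex_of_real (real n) * K = P"
  proof -
    have "complex_of_real ((real n)^4) = exp (4 * complex_of_real L)"
      unfolding of_real_power nexp by (simp add: exp_of_nat_mult[symmetric])
    moreover have "complex_of_real (real n) powr e = exp (e * complex_of_real L)"
      unfolding L_def by (rule cpowr_exp[OF npos])
    ultimately show ?thesis
      unfolding K_def P_def e_def
      apply (subst (1) nexp)
      by (simp add: exp_add[symmetric] exp_diff[symmetric] algebra_simps)
  qed
  have P2: "(of_nat n :: complex) powr (2 - 2 * s) = complex_of_real ((real n)\<^sup>2) * P"
  proof -
    have "(of_nat n :: complex) powr (2 - 2 * s) = exp ((2 - 2 * s) * complex_of_real L)"
      using cpowr_exp[OF npos, of "2 - 2 * s"] unfolding L_def by simp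
    moreover have "complex_of_real ((real n)\<^sup>2) = exp (2 * complex_of_real L)"
      unfolding of_real_power nexp by (simp add: exp_of_nat_mult[symmetric])
    ultimately show ?thesis unfolding P_def by (simp add: exp_add[symmetric] algebra_simps)
  qed
  have diff_eq: "J_inf n s - a_inf s * of_nat n powr (2 - 2 * s)
      = P * integral {1..} (\<lambda>t. complex_of_real t powr e * complex_of_real (SS n t - (real n)\<^sup>2 * AA t))"
  proof -
    have "J_inf n s - a_inf s * of_nat n powr (2 - 2 * s)
        = P * (integral {1..} fs - complex_of_real ((real n)\<^sup>2) * integral {1..} fa)"
      unfolding J_eq A_eq P2 mult.assoc[symmetric] P1 by (simp add: algebra_simps)
    also have "integral {1..} fs - complex_of_real ((real n)\<^sup>2) * integral {1..} fa
        = integral {1..} (\<lambda>t. fs t - complex_of_real ((real n)\<^sup>2) * fa t)"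
    proof -
      have ci: "(\<lambda>t. complex_of_real ((real n)\<^sup>2) * fa t) integrable_on {1..}"
        using fa_int(2) has_integral_mult_right unfolding integrable_on_def by blast
      have "integral {1..} (\<lambda>t. fs t - complex_of_real ((real n)\<^sup>2) * fa t)
          = integral {1..} fs - integral {1..} (\<lambda>t. complex_of_real ((real n)\<^sup>2) * fa t)"
        by (rule integral_diff[OF fs_int(2) ci])
      then show ?thesis by simp
    qed
    also have "(\<lambda>t. fs t - complex_of_real ((real n)\<^sup>2) * fa t)
        = (\<lambda>t. complex_of_real t powr e * complex_of_real (SS n t - (real n)\<^sup>2 * AA t))"
      unfolding fs_def fa_def by (auto simp: algebra_simps)
    finally show ?thesis .
  qed
  have nP: "norm P \<le> 1"
    unfolding P_def using sg0 npos n by (simp add: L_def sg_def)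
  have hi: "((\<lambda>t. t powr (-1 - 2 * sg)) has_integral (-(1 powr (-1 - 2 * sg + 1)) / (-1 - 2 * sg + 1))) {1..}"
    by (rule has_integral_powr_to_inf) (use sg0 in auto)
  have hi2: "((\<lambda>t. C * t powr (-1 - 2 * sg)) has_integral C * (1 / (2 * sg))) {1..}"
    using has_integral_mult_right[OF hi, of C] sg0 by (simp add: field_simps)
  have dint: "(\<lambda>t. complex_of_real t powr e * complex_of_real (SS n t - (real n)\<^sup>2 * AA t)) integrable_on {1..}"
  proof -
    have "(\<lambda>t. fs t - complex_of_real ((real n)\<^sup>2) * fa t) integrable_on {1..}"
      using fs_int(2) fa_int(2) by (intro integrable_diff integrable_on_cmult_left) auto
    moreover have "(\<lambda>t. fs t - complex_of_real ((real n)\<^sup>2) * fa t)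
        = (\<lambda>t. complex_of_real t powr e * complex_of_real (SS n t - (real n)\<^sup>2 * AA t))"
      unfolding fs_def fa_def by (auto simp: algebra_simps)
    ultimately show ?thesis by simp
  qed
  have "norm (integral {1..} (\<lambda>t. complex_of_real t powr e * complex_of_real (SS n t - (real n)\<^sup>2 * AA t)))
      \<le> integral {1..} (\<lambda>t. C * t powr (-1 - 2 * sg))"
  proof (rule integral_norm_bound_integral[OF dint])
    show "(\<lambda>t. C * t powr (-1 - 2 * sg)) integrable_on {1..}" using hi2 by (auto simp: integrable_on_def)
    fix t :: real assume "t \<in> {1..}"
    then have t: "1 \<le> t" by simp
    have "norm (complex_of_real t powr e * complex_of_real (SS n t - (real n)\<^sup>2 * AA t))
        = t powr (3 - 2 * sg) * \<bar>SS n t - (real n)\<^sup>2 * AA t\<bar>"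
      unfolding norm_mult norm_of_real using t by (simp add: cpowr_norm Ree)
    also have "\<dots> \<le> t powr (3 - 2 * sg) * (C * (1 / t^4))"
      by (rule mult_left_mono) (use main_bound[OF t, of n] in \<open>simp_all add: C_def\<close>)
    also have "\<dots> = C * (t powr (3 - 2 * sg) * (1 / t^4))" by simp
    finally have "norm (complex_of_real t powr e * complex_of_real (SS n t - (real n)\<^sup>2 * AA t)) \<le> C * (t powr (3 - 2 * sg) * (1 / t^4))" .
    then show "norm (complex_of_real t powr e * complex_of_real (SS n t - (real n)\<^sup>2 * AA t)) \<le> C * t powr (-1 - 2 * sg)"
      by (simp only: pw_over[OF t])
  qed
  also have "\<dots> = C * (1 / (2 * sg))" using integral_unique[OF hi2] .
  finally have I: "norm (integral {1..} (\<lambda>t. complex_of_real t powr e * complex_of_real (SS n t - (real n)\<^sup>2 * AA t))) \<le> C / (2 * sg)"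
    by simp
  have "norm (J_inf n s - a_inf s * of_nat n powr (2 - 2 * s)) \<le> 1 * (C / (2 * sg))"
    unfolding diff_eq norm_mult by (rule mult_mono[OF nP I]) auto
  then show ?thesis unfolding C_def sg_def by simp
qed

theorem proposition3p3:
  fixes s :: complex and N :: nat
  assumes "Re s > 0"
  shows "(\<lambda>n::nat. J_inf n s - a_inf s * of_nat n powr (2 - 2 * s))
           \<in> O(\<lambda>n. complex_of_real (real n powr (- real N)))"
proof (rule bigoI)
  have ev1: "eventually (\<lambda>n::nat. n \<ge> 1) sequentially" by (rule eventually_ge_at_top)
  show "eventually (\<lambda>n. norm (J_inf n s - a_inf s * of_nat n powr (2 - 2 * s))
          \<le> (1 / (2 * Re s)) * norm (complex_of_real (real n powr (- real N)))) sequentially"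
    using ev1 Cn_small[of N]
  proof eventually_elim
    case (elim n)
    have "norm (J_inf n s - a_inf s * of_nat n powr (2 - 2 * s)) \<le> 2 * (real n)\<^sup>2 * (real (2*n+1) * (1/4)^n) / (2 * Re s)"
      by (rule key_estimate[OF assms elim(1)])
    also have "\<dots> \<le> real n powr (- real N) / (2 * Re s)"
      by (rule divide_right_mono[OF elim(2)]) (use assms in simp)
    finally show ?case by simp
  qed
qed

end
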